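(* Let $\mathcal A=\{p_1,\dots,p_n\}\subset\mathbb R^2$ be a point set not contained in a line, with $p_1$ and $p_2$ having different second coordinates. Then the expansion cone $\overline{Y_0}(\mathcal A)$ has full dimension $3n-3$ in $S$, and it is a pointed polyhedral cone, i.e. it contains no pair of opposite non-zero vectors.
   Context: Write $v_i=(v_i^1,v_i^2)\in\mathbb R^2$. Define $$S=\{(v_1,\dots,v_n,t_1,\dots,t_n)\in(\mathbb R^2)^n\times\mathbb R^n:\ v_1^1=v_1^2=v_2^1=0\},$$ a $(3n-3)$-dimensional subspace of $\mathbb R^{3n}$. The expansion cone $\overline{Y_0}(\mathcal A)$ is the set of $(v,t)\in S$ satisfying both of: - $\langle p_i-p_j,v_i-v_j\rangle-|p_i-p_j|(t_i+t_j)\ge 0$ for all $1\le i<j\le n$; - $t_j\ge 0$ for all $j$. *)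

theory Defs
  imports "HOL-Analysis.Analysis"
begin

text \<open>Points p_1..p_n are indexed by a finite type 'n with CARD('n) = n;
  the distinguished indices 1 and 2 are i1 and i2. A vector of R^{3n} is a pair (v,t)
  with v :: (real^2)^'n and t :: real^'n.\<close>

definition S_space :: "'n::finite \<Rightarrow> 'n \<Rightarrow> (((real^2)^'n) \<times> (real^'n)) set" where
  "S_space i1 i2 = {(v, t). v$i1$1 = 0 \<and> v$i1$2 = 0 \<and> v$i2$1 = 0}"

definition expansion_cone ::
  "('n::finite \<Rightarrow> real^2) \<Rightarrow> 'n \<Rightarrow> 'n \<Rightarrow> (((real^2)^'n) \<times> (real^'n)) set" where
  "expansion_cone p i1 i2 = {(v, t) \<in> S_space i1 i2.
      (\<forall>i j. i \<noteq> j \<longrightarrow>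
         inner (p i - p j) (v$i - v$j) - norm (p i - p j) * (t$i + t$j) \<ge> 0)
    \<and> (\<forall>j. t$j \<ge> 0)}"

end

theory Submission
  imports Defs
begin

lemma lin_rep:
  fixes f :: "'a::euclidean_space \<Rightarrow> real"
  assumes "linear f"
  shows "f = (\<lambda>x. (\<Sum>b\<in>Basis. f b *\<^sub>R b) \<bullet> x)"
proof
  fix x
  have "f x = f (\<Sum>b\<in>Basis. (x \<bullet> b) *\<^sub>R b)" by (simp add: euclidean_representation)
  also have "\<dots> = (\<Sum>b\<in>Basis. (x \<bullet> b) * f b)"
    using assms by (simp add: linear_sum linear_scale o_def)
  also have "\<dots> = (\<Sum>b\<in>Basis. f b *\<^sub>R b) \<bullet> x"
    by (simp add: inner_sum_right inner_commute mult.commute)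
  finally show "f x = (\<Sum>b\<in>Basis. f b *\<^sub>R b) \<bullet> x" .
qed

lemma poly_lin_le:
  fixes f :: "'a::euclidean_space \<Rightarrow> real"
  assumes "linear f" shows "polyhedron {x. f x \<le> b}"
  using polyhedron_halfspace_le lin_rep[OF assms] by metis

lemma poly_lin_eq:
  fixes f :: "'a::euclidean_space \<Rightarrow> real"
  assumes "linear f" shows "polyhedron {x. f x = b}"
  using polyhedron_hyperplane lin_rep[OF assms] by metis

lemma affine_lin_eq:
  fixes f :: "'a::euclidean_space \<Rightarrow> real"
  assumes "linear f" shows "affine {x. f x = b}"
  using affine_hyperplane lin_rep[OF assms] by metis

lemma open_lin_gt:
  fixes f :: "'a::euclidean_space \<Rightarrow> real"
  assumes "linear f" shows "open {x. 0 < f x}"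
  apply (rule open_Collect_less)
   apply (simp add: continuous_on_const)
  using assms linear_conv_bounded_linear linear_continuous_on by blast

lemma aff_step:
  fixes f :: "'a::euclidean_space \<Rightarrow> real"
  assumes "affine A" "linear f" "0 \<in> A" "y \<in> A" "f y \<noteq> 0"
  shows "aff_dim (A \<inter> {x. f x = 0}) = aff_dim A - 1"
proof -
  obtain a where a: "f = (\<lambda>x. a \<bullet> x)" using lin_rep[OF assms(2)] by blast
  have "f 0 = 0" using assms(2) linear_0 by blast
  then show ?thesis using aff_dim_affine_Int_hyperplane[OF assms(1), of a 0] assms(3-5) a
    by auto
qed

lemma two_inner_zero:
  fixes a b w :: "real^2"
  assumes "inner a w = 0" "inner b w = 0" "a$1*b$2 - a$2*b$1 \<noteq> 0"
  shows "w = 0"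
proof -
  have e1: "a$1*w$1 + a$2*w$2 = 0" "b$1*w$1 + b$2*w$2 = 0"
    using assms by (auto simp: inner_vec_def sum_2)
  have "(a$1*b$2 - a$2*b$1) * w$1 = 0" using e1 by algebra
  moreover have "(a$1*b$2 - a$2*b$1) * w$2 = 0" using e1 by algebra
  ultimately show ?thesis using assms(3) by (simp add: vec_eq_iff forall_2)
qed

definition G :: "('n::finite \<Rightarrow> real^2) \<Rightarrow> 'n \<times> 'n \<Rightarrow> ((real^2)^'n) \<times> (real^'n) \<Rightarrow> real" where
  "G p ij x = (if fst ij \<noteq> snd ij then
      inner (p (fst ij) - p (snd ij)) (fst x $ fst ij - fst x $ snd ij)
      - norm (p (fst ij) - p (snd ij)) * (snd x $ fst ij + snd x $ snd ij) else 0)"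

lemma lin_G: "linear (G p ij)"
  by (rule linearI) (auto simp: G_def inner_add_right inner_diff_right algebra_simps)

lemma lin_neg_G: "linear (\<lambda>x. - G p ij x)"
  using lin_G linear_compose_neg by blast

lemma lin_coord: "linear (\<lambda>x::((real^2)^'n::finite) \<times> (real^'n). fst x $ i $ k)"
  by (rule linearI) auto

lemma lin_tcoord: "linear (\<lambda>x::((real^2)^'n::finite) \<times> (real^'n). - snd x $ j)"
  by (rule linearI) auto

lemma S_eq: "S_space i1 i2 = {x. fst x $ i1 $ 1 = 0} \<inter> {x. fst x $ i1 $ 2 = 0} \<inter> {x. fst x $ i2 $ 1 = 0}"
  by (auto simp: S_space_def)

lemma cone_eq: "expansion_cone p i1 i2 = S_space i1 i2 \<inter> (\<Inter>ij. {x. - G p ij x \<le> 0}) \<inter> (\<Inter>j. {x. - snd x $ j \<le> 0})"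
  unfolding expansion_cone_def G_def by auto

lemma poly_cone: "polyhedron (expansion_cone p i1 i2)"
  unfolding cone_eq S_eq
  by (intro polyhedron_Int polyhedron_Inter poly_lin_eq poly_lin_le lin_coord lin_tcoord lin_neg_G finite_imageI finite)
    (auto intro: poly_lin_le[OF lin_neg_G, of _ _ 0, simplified] poly_lin_le[OF lin_tcoord, of _ 0, simplified])

lemma cone_cone: "cone (expansion_cone p i1 i2)"
  unfolding cone_def
proof (intro ballI allI impI)
  fix x :: "((real^2)^'a) \<times> (real^'a)" and c :: real
  assume x: "x \<in> expansion_cone p i1 i2" and c: "0 \<le> c"
  obtain v t where xv: "x = (v, t)" by (cases x)
  have h: "\<And>i j. i \<noteq> j \<Longrightarrow> inner (p i - p j) (v$i - v$j) - norm (p i - p j) * (t$i + t$j) \<ge> 0"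
    and t: "\<And>j. t$j \<ge> 0" and S: "(v,t) \<in> S_space i1 i2"
    using x xv by (auto simp: expansion_cone_def)
  have "\<And>i j. i \<noteq> j \<Longrightarrow> inner (p i - p j) ((c *\<^sub>R v)$i - (c *\<^sub>R v)$j) - norm (p i - p j) * ((c *\<^sub>R t)$i + (c *\<^sub>R t)$j)
     = c * (inner (p i - p j) (v$i - v$j) - norm (p i - p j) * (t$i + t$j))"
    by (simp add: inner_diff_right algebra_simps)
  then have "\<And>i j. i \<noteq> j \<Longrightarrow> inner (p i - p j) ((c *\<^sub>R v)$i - (c *\<^sub>R v)$j) - norm (p i - p j) * ((c *\<^sub>R t)$i + (c *\<^sub>R t)$j) \<ge> 0"
    using h c by simp
  moreover have "\<And>j. (c *\<^sub>R t)$j \<ge> 0" using t c by simp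
  moreover have "(c *\<^sub>R v, c *\<^sub>R t) \<in> S_space i1 i2" using S by (simp add: S_space_def)
  ultimately show "c *\<^sub>R x \<in> expansion_cone p i1 i2"
    unfolding xv expansion_cone_def by simp
qed

definition D :: "real^2 \<Rightarrow> real^2 \<Rightarrow> real" where
  "D a b = a$1*b$2 - a$2*b$1"

lemma noncol_witness:
  fixes p :: "'n::finite \<Rightarrow> real^2"
  assumes "\<not> collinear (range p)" "p i1 $ 2 \<noteq> p i2 $ 2"
  shows "\<exists>m. D (p m - p i1) (p i2 - p i1) \<noteq> 0"
proof (rule ccontr)
  assume "\<not> ?thesis"
  then have z: "\<And>m. D (p m - p i1) (p i2 - p i1) = 0" by blast
  define d0 where "d0 = p i2 - p i1"
  have d0: "d0$2 \<noteq> 0" using assms(2) by (simp add: d0_def)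
  define lam where "lam m = (p m - p i1)$2 / d0$2" for m
  have rep: "p m - p i1 = lam m *\<^sub>R d0" for m
  proof -
    have "(p m - p i1)$1 * d0$2 = (p m - p i1)$2 * d0$1" using z[of m] by (simp add: D_def d0_def)
    then show ?thesis using d0 by (simp add: vec_eq_iff forall_2 lam_def field_simps)
  qed
  have "collinear (range p)"
    unfolding collinear_def
  proof (rule exI[of _ d0], intro ballI)
    fix x y assume "x \<in> range p" "y \<in> range p"
    then obtain m m' where "x = p m" "y = p m'" by auto
    then have "x - y = (p m - p i1) - (p m' - p i1)" by simp
    also have "\<dots> = (lam m - lam m') *\<^sub>R d0" by (simp add: rep scaleR_diff_left)
    finally show "\<exists>c. x - y = c *\<^sub>R d0" by blast
  qed
  then show False using assms(1) by simp
qed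

lemma two_inner_zeroD:
  fixes a b w :: "real^2"
  assumes "inner a w = 0" "inner b w = 0" "D a b \<noteq> 0"
  shows "w = 0"
  using two_inner_zero assms by (simp add: D_def)

lemma pointed:
  fixes p :: "'n::finite \<Rightarrow> real^2"
  assumes "i1 \<noteq> i2" "inj p" "\<not> collinear (range p)" "p i1 $ 2 \<noteq> p i2 $ 2"
    and x: "x \<in> expansion_cone p i1 i2" and nx: "- x \<in> expansion_cone p i1 i2"
  shows "x = 0"
proof -
  obtain v t where xv: "x = (v, t)" by (cases x)
  have h1: "\<And>i j. i \<noteq> j \<Longrightarrow> inner (p i - p j) (v$i - v$j) - norm (p i - p j) * (t$i + t$j) \<ge> 0"
    and t1: "\<And>j. t$j \<ge> 0" and S: "(v,t) \<in> S_space i1 i2"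
    using x xv by (auto simp: expansion_cone_def)
  have h2: "\<And>i j. i \<noteq> j \<Longrightarrow> inner (p i - p j) ((-v)$i - (-v)$j) - norm (p i - p j) * ((-t)$i + (-t)$j) \<ge> 0"
    and t2: "\<And>j. (-t)$j \<ge> 0"
    using nx xv by (auto simp: expansion_cone_def)
  have t0: "t = 0" using t1 t2 by (simp add: vec_eq_iff) (meson antisym neg_le_0_iff_le)
  have E: "inner (p i - p j) (v$i - v$j) = 0" for i j
  proof (cases "i = j")
    case False
    then show ?thesis using h1[OF False] h2[OF False] t0 by (simp add: inner_diff_right)
  qed simp
  have v1: "v$i1 = 0" using S by (simp add: S_space_def vec_eq_iff forall_2)
  have "inner (p i2 - p i1) (v$i2) = 0" using E[of i2 i1] v1 by simp
  moreover have "v$i2$1 = 0" using S by (simp add: S_space_def)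
  ultimately have "(p i2 - p i1)$2 * v$i2$2 = 0" by (simp add: inner_vec_def sum_2)
  then have "v$i2$2 = 0" using assms(4) by simp
  then have v2: "v$i2 = 0" using \<open>v$i2$1 = 0\<close> by (simp add: vec_eq_iff forall_2)
  have Ek1: "inner (p k - p i1) (v$k) = 0" for k using E[of k i1] v1 by simp
  have Ek2: "inner (p k - p i2) (v$k) = 0" for k using E[of k i2] v2 by simp
  have good: "v$k = 0" if "D (p k - p i1) (p i2 - p i1) \<noteq> 0" for k
  proof -
    have "D (p k - p i1) (p k - p i2) = - D (p k - p i1) (p i2 - p i1)"
      by (simp add: D_def algebra_simps)
    then show ?thesis using that two_inner_zeroD[OF Ek1 Ek2] by simp
  qed
  obtain m where m: "D (p m - p i1) (p i2 - p i1) \<noteq> 0" using noncol_witness[OF assms(3,4)] by blast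
  have vm: "v$m = 0" using good[OF m] .
  have vall: "v$k = 0" for k
  proof (cases "D (p k - p i1) (p i2 - p i1) = 0")
    case False then show ?thesis using good by blast
  next
    case True
    show ?thesis
    proof (cases "k = i1")
      case True then show ?thesis using v1 by simp
    next
      case False
      define a where "a = p k - p i1"
      define e where "e = p m - p i1"
      define d where "d = p i2 - p i1"
      have a0: "a \<noteq> 0" using False assms(2) by (simp add: a_def inj_eq)
      have ad: "a$1*d$2 - a$2*d$1 = 0" using True by (simp add: D_def a_def d_def)
      have ed: "e$1*d$2 - e$2*d$1 \<noteq> 0" using m by (simp add: D_def e_def d_def)
      have ae: "a$1*e$2 - a$2*e$1 \<noteq> 0"
      proof
        assume ae0: "a$1*e$2 - a$2*e$1 = 0"
        have "(e$1*d$2 - e$2*d$1) * a$1 = 0" using ad ae0 by algebra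
        moreover have "(e$1*d$2 - e$2*d$1) * a$2 = 0" using ad ae0 by algebra
        ultimately have "a = 0" using ed by (simp add: vec_eq_iff forall_2)
        then show False using a0 by simp
      qed
      have Ekm: "inner (p k - p m) (v$k) = 0" using E[of k m] vm by simp
      have "D (p k - p i1) (p k - p m) \<noteq> 0"
      proof -
        have "p k - p m = a - e" by (simp add: a_def e_def)
        then have "D (p k - p i1) (p k - p m) = D a (a - e)" by (metis a_def)
        also have "\<dots> = - (a$1*e$2 - a$2*e$1)" by (simp add: D_def algebra_simps)
        finally have "D (p k - p i1) (p k - p m) = - (a$1*e$2 - a$2*e$1)" .
        then show ?thesis using ae by simp
      qed
      then show ?thesis using two_inner_zeroD[OF Ek1 Ekm] by simp
    qed
  qed
  show ?thesis using xv t0 vall by (simp add: vec_eq_iff zero_prod_def)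
qed

lemma aff_S:
  assumes "(i1::'n::finite) \<noteq> i2"
  shows "aff_dim (S_space i1 i2) = 3 * int CARD('n) - 3" "affine (S_space i1 i2)"
proof -
  let ?H1 = "{x::((real^2)^'n) \<times> (real^'n). fst x $ i1 $ 1 = 0}"
  let ?H2 = "{x::((real^2)^'n) \<times> (real^'n). fst x $ i1 $ 2 = 0}"
  let ?H3 = "{x::((real^2)^'n) \<times> (real^'n). fst x $ i2 $ 1 = 0}"
  have a1: "affine ?H1" "affine ?H2" "affine ?H3" by (intro affine_lin_eq lin_coord)+
  have "aff_dim (UNIV::(((real^2)^'n) \<times> (real^'n)) set) = 3 * int CARD('n)" by simp
  moreover have "aff_dim (UNIV \<inter> ?H1) = aff_dim (UNIV::(((real^2)^'n) \<times> (real^'n)) set) - 1"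
    by (rule aff_step[OF affine_UNIV lin_coord, where y="(axis i1 (axis 1 1), 0)"]) (auto simp: axis_def)
  moreover have "aff_dim ((UNIV \<inter> ?H1) \<inter> ?H2) = aff_dim (UNIV \<inter> ?H1) - 1"
    by (rule aff_step[OF _ lin_coord, where y="(axis i1 (axis 2 1), 0)"]) (auto simp: axis_def a1)
  moreover have "aff_dim ((UNIV \<inter> ?H1 \<inter> ?H2) \<inter> ?H3) = aff_dim (UNIV \<inter> ?H1 \<inter> ?H2) - 1"
    by (rule aff_step[OF _ lin_coord, where y="(axis i2 (axis 1 1), 0)"]) (use assms in \<open>auto simp: axis_def a1 affine_Int\<close>)
  moreover have "S_space i1 i2 = UNIV \<inter> ?H1 \<inter> ?H2 \<inter> ?H3" by (auto simp: S_space_def)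
  ultimately show "aff_dim (S_space i1 i2) = 3 * int CARD('n) - 3" by simp
  show "affine (S_space i1 i2)" unfolding S_eq using a1 by (intro affine_Int)
qed

lemma full_dim:
  fixes p :: "'n::finite \<Rightarrow> real^2"
  assumes "i1 \<noteq> i2" "inj p" "p i1 $ 2 \<noteq> p i2 $ 2"
  shows "aff_dim (expansion_cone p i1 i2) = 3 * int CARD('n) - 3"
proof -
  let ?S = "S_space i1 i2"
  let ?C = "expansion_cone p i1 i2"
  define U where "U = (\<Inter>ij. {x. 0 < (if fst ij \<noteq> snd ij then G p ij x else 1)}) \<inter> (\<Inter>j. {x::((real^2)^'n) \<times> (real^'n). 0 < snd x $ j})"
  have oU: "open U" unfolding U_def
  proof (intro open_Int open_INT ballI finite)
    fix ij :: "'n \<times> 'n"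
    show "open {x. 0 < (if fst ij \<noteq> snd ij then G p ij x else 1)}"
      by (cases "fst ij = snd ij") (auto intro: open_lin_gt[OF lin_G])
  next
    fix j :: 'n
    show "open {x::((real^2)^'n) \<times> (real^'n). 0 < snd x $ j}"
      by (rule open_lin_gt) (rule linearI, auto)
  qed
  have sub: "?S \<inter> U \<subseteq> ?C"
  proof
    fix x assume x: "x \<in> ?S \<inter> U"
    have "- G p ij x \<le> 0" for ij
    proof (cases "fst ij = snd ij")
      case True then show ?thesis by (simp add: G_def)
    next
      case False
      from x have "x \<in> {x. 0 < (if fst ij \<noteq> snd ij then G p ij x else 1)}" unfolding U_def by blast
      then show ?thesis using False by simp
    qed
    moreover have "- snd x $ j \<le> 0" for j
    proof -
      from x have "x \<in> {x. 0 < snd x $ j}" unfolding U_def by blast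
      then show ?thesis by simp
    qed
    ultimately show "x \<in> ?C" using x unfolding cone_eq by blast
  qed
  define d0 where "d0 = p i2 - p i1"
  have d02: "d0$2 \<noteq> 0" using assms(3) by (simp add: d0_def)
  define c where "c = d0$1 / d0$2"
  define R where "R a = (vector [a$1 - c*a$2, a$2 + c*a$1] :: real^2)" for a :: "real^2"
  have Rdiff: "R a - R b = R (a - b)" for a b by (simp add: R_def vec_eq_iff forall_2 algebra_simps)
  have Rin: "inner a (R a) = (norm a)^2" for a
    by (simp add: R_def power2_norm_eq_inner inner_vec_def sum_2 algebra_simps)
  define P where "P = {ij::'n\<times>'n. fst ij \<noteq> snd ij}"
  define m where "m = Min ((\<lambda>ij. norm (p (fst ij) - p (snd ij))) ` P)"
  have Pne: "P \<noteq> {}" using assms(1) proof -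
    have "(i1, i2) \<in> P" using assms(1) by (simp add: P_def)
    then show ?thesis by blast
  qed
  have mle: "m \<le> norm (p i - p j)" if "i \<noteq> j" for i j
  proof -
    have "(i, j) \<in> P" using that by (simp add: P_def)
    then have "norm (p i - p j) \<in> (\<lambda>ij. norm (p (fst ij) - p (snd ij))) ` P"
      by (metis (no_types, lifting) fst_conv snd_conv image_eqI)
    then show ?thesis unfolding m_def by (intro Min_le) auto
  qed
  have mpos: "m > 0" unfolding m_def using Pne assms(2)
    by (subst Min_gr_iff) (auto simp: P_def inj_eq)
  define eps where "eps = m / 4"
  define x0 where "x0 = ((\<chi> i. R (p i - p i1)) :: (real^2)^'n, (\<chi> i. eps) :: real^'n)"
  have x0S: "x0 \<in> ?S"
  proof -
    have "R 0 = 0" by (simp add: R_def vec_eq_iff forall_2)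
    moreover have "R d0 $ 1 = 0" using d02 by (simp add: R_def c_def field_simps)
    ultimately show ?thesis by (simp add: x0_def S_space_def d0_def)
  qed
  have x0U: "x0 \<in> U"
  proof -
    have "0 < G p ij x0" if "fst ij \<noteq> snd ij" for ij
    proof -
      obtain i j where ij: "ij = (i, j)" by (cases ij)
      have ne: "i \<noteq> j" using that ij by simp
      let ?d = "p i - p j"
      have "G p ij x0 = inner ?d (R ?d) - norm ?d * (2 * eps)"
        by (simp add: G_def ij ne x0_def Rdiff)
      also have "\<dots> = norm ?d * (norm ?d - 2 * eps)" by (simp add: Rin power2_eq_square algebra_simps)
      also have "\<dots> > 0"
        using mle[OF ne] mpos by (intro mult_pos_pos) (auto simp: eps_def)
      finally show ?thesis .
    qed
    moreover have "eps > 0" using mpos by (simp add: eps_def)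
    ultimately show ?thesis unfolding U_def by (auto simp: x0_def)
  qed
  have conv: "convex ?S" using aff_S(2)[OF assms(1)] affine_imp_convex by blast
  have hull: "affine hull (?S \<inter> U) = affine hull ?S"
    by (rule affine_hull_convex_Int_open[OF conv oU]) (use x0S x0U in blast)
  have "aff_dim (?S \<inter> U) = aff_dim ?S" by (metis aff_dim_affine_hull hull)
  moreover have "aff_dim (?S \<inter> U) \<le> aff_dim ?C" by (rule aff_dim_subset[OF sub])
  moreover have "aff_dim ?C \<le> aff_dim ?S" by (rule aff_dim_subset) (auto simp: expansion_cone_def)
  ultimately show ?thesis using aff_S(1)[OF assms(1)] by linarith
qed

theorem mainTheorem9:
  fixes p :: "'n::finite \<Rightarrow> real^2" and i1 i2 :: 'n
  assumes "i1 \<noteq> i2"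
    and "inj p"
    and "\<not> collinear (range p)"
    and "p i1 $ 2 \<noteq> p i2 $ 2"
  shows "aff_dim (expansion_cone p i1 i2) = 3 * int CARD('n) - 3
    \<and> polyhedron (expansion_cone p i1 i2)
    \<and> cone (expansion_cone p i1 i2)
    \<and> (\<forall>x \<in> expansion_cone p i1 i2. - x \<in> expansion_cone p i1 i2 \<longrightarrow> x = 0)"
  using full_dim[OF assms(1,2,4)] poly_cone cone_cone pointed[OF assms] by blast

end
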